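(* Let $X_1, X_2, \ldots$ be independent and identically distributed random variables with the standard normal law $N(0,1)$ (so the true location parameter is $\mu = 0$ and the known scale is $\sigma = 1$). For $m \geq 0$ let $K_m = \sum_{k=1}^m X_k$. Fix a shape parameter $\gamma \geq 0$ (arbitrary), let $\psi = 1_{[0,\infty[}$, and for each positive integer $n$ let $N_n$ be the $\{n, 2n\}$-valued random sample size depending only on $X_1,\ldots,X_n$ through $$\mathbb{P}[N_n = n \mid X_1,\ldots,X_n] = \psi(K_n/n^\gamma),$$ i.e. $N_n = n$ if $K_n \geq 0$ and $N_n = 2n$ if $K_n < 0$. Define the marginal MLE $\widehat{\mu}_{N_n} = \frac{1}{N_n}\sum_{k=1}^{N_n} X_k$, and the conditional MLE $\widehat{\mu}_{c,N_n}$ as the value of $\theta \in \mathbb{R}$ which, on the event $N_n = m$ ($m \in \{n,2n\}$), maximizes the conditional likelihood $$\mathcal{L}(\theta; X_1,\ldots,X_m \mid N_n = m) = \prod_{k=1}^m \phi(X_k - \theta)\,\frac{\mathbb{P}_\theta[N_n = m \mid X_1,\ldots,X_m]}{\mathbb{P}_\theta[N_n = m]},$$ where $\phi$ is the standard normal density and $\mathbb{P}_\theta$ denotes probability when the $X_k$ are i.i.d. $N(\theta,1)$ (so $\mathbb{P}_\theta[N_n = n] = \Phi(\sqrt{n}\,\theta)$ and $\mathbb{P}_\theta[N_n = 2n] = 1-\Phi(\sqrt{n}\,\theta)$, with $\Phi$ the standard normal distribution function; this maximizer exists and is unique). Then $$\lim_{n\to\infty} \mathbb{E}\big[|\widehat{\mu}_{N_n}|\big]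 = 0 \quad\text{and}\quad \mathbb{E}\big[|\widehat{\mu}_{c,N_n}|\big] = \infty \text{ for every positive integer } n.$$
   Context: This models a two-stage group sequential trial: after observing $X_1,\ldots,X_n$ the trial stops (final sample size $n$) if $K_n \ge 0$, and otherwise the further observations $X_{n+1},\ldots,X_{2n}$ are collected (final sample size $2n$). Expectations $\mathbb{E}$ are under the true parameter $\mu = 0$, $\sigma = 1$. *)

theory Defs
  imports "HOL-Probability.Probability"
begin

text \<open>Data are represented as a sequence x :: nat => real; x k is X_k (k >= 1).\<close>

definition psi :: "real \<Rightarrow> real" where
  "psi t = indicator {0..} t"

definition Ksum :: "(nat \<Rightarrow> real) \<Rightarrow> nat \<Rightarrow> real" where
  "Ksum x m = (\<Sum>k\<in>{1..m}. x k)"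

definition Nsize :: "real \<Rightarrow> nat \<Rightarrow> (nat \<Rightarrow> real) \<Rightarrow> nat" where
  "Nsize \<gamma> n x = (if psi (Ksum x n / real n powr \<gamma>) = 1 then n else 2 * n)"

definition Phi :: "real \<Rightarrow> real" where
  "Phi t = cdf (density lborel std_normal_density) t"

text \<open>P_theta[N_n = m | X_1..X_m] (depends only on X_1..X_n).\<close>
definition cond_prob_N :: "real \<Rightarrow> nat \<Rightarrow> nat \<Rightarrow> (nat \<Rightarrow> real) \<Rightarrow> real" where
  "cond_prob_N \<gamma> n m x =
     (if m = n then psi (Ksum x n / real n powr \<gamma>) else 1 - psi (Ksum x n / real n powr \<gamma>))"

definition prob_N :: "nat \<Rightarrow> nat \<Rightarrow> real \<Rightarrow> real" where
  "prob_N n m \<theta> = (if m = n then Phi (sqrt (real n) * \<theta>) else 1 - Phi (sqrt (real n) * \<theta>))"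

definition cond_lik :: "real \<Rightarrow> nat \<Rightarrow> nat \<Rightarrow> (nat \<Rightarrow> real) \<Rightarrow> real \<Rightarrow> real" where
  "cond_lik \<gamma> n m x \<theta> =
     (\<Prod>k\<in>{1..m}. std_normal_density (x k - \<theta>)) * cond_prob_N \<gamma> n m x / prob_N n m \<theta>"

definition mle :: "real \<Rightarrow> nat \<Rightarrow> (nat \<Rightarrow> real) \<Rightarrow> real" where
  "mle \<gamma> n x = Ksum x (Nsize \<gamma> n x) / real (Nsize \<gamma> n x)"

definition mle_c :: "real \<Rightarrow> nat \<Rightarrow> (nat \<Rightarrow> real) \<Rightarrow> real" where
  "mle_c \<gamma> n x = (THE \<theta>. \<forall>\<theta>'. cond_lik \<gamma> n (Nsize \<gamma> n x) x \<theta>' \<le> cond_lik \<gamma> n (Nsize \<gamma> n x) x \<theta>)"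

end

theory Submission
  imports Defs "HOL-Real_Asymp.Real_Asymp"
begin


lemma Phi_nn: "ennreal (Phi t) = (\<integral>\<^sup>+v. ennreal (std_normal_density (t - v)) * indicator {0..} v \<partial>lborel)"
proof -
  interpret P: prob_space "density lborel std_normal_density" by (rule prob_space_normal_density) simp
  have "ennreal (Phi t) = emeasure (density lborel std_normal_density) {..t}"
    unfolding Phi_def cdf_def by (simp add: P.emeasure_eq_measure)
  also have "\<dots> = (\<integral>\<^sup>+u. ennreal (std_normal_density u) * indicator {..t} u \<partial>lborel)"
    by (rule emeasure_density) auto
  also have "\<dots> = ennreal \<bar>-1\<bar> * (\<integral>\<^sup>+v. ennreal (std_normal_density (t + (-1) * v)) * indicator {..t} (t + (-1) * v) \<partial>lborel)"
    by (rule nn_integral_real_affine) auto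
  also have "\<dots> = (\<integral>\<^sup>+v. ennreal (std_normal_density (t - v)) * indicator {0..} v \<partial>lborel)"
    by (auto intro!: nn_integral_cong simp: indicator_def)
  finally show ?thesis .
qed

lemma Phi_nonneg: "Phi t \<ge> 0"
  unfolding Phi_def cdf_def by simp

definition Eg :: "real \<Rightarrow> real \<Rightarrow> real \<Rightarrow> real" where
  "Eg s t v = exp (t * (v - s) - v^2 / 2)"

definition J :: "real \<Rightarrow> real \<Rightarrow> ennreal" where
  "J s t = (\<integral>\<^sup>+v. ennreal (Eg s t v) * indicator {0..} v \<partial>lborel)"

definition Hr :: "real \<Rightarrow> real \<Rightarrow> real" where
  "Hr s t = Phi t * exp (t^2 / 2 - s * t)"

lemma Eg_meas[measurable]: "Eg s t \<in> borel_measurable borel"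
  unfolding Eg_def by measurable

lemma J_eq: "J s t = ennreal (sqrt (2*pi) * Hr s t)"
proof -
  define c where "c = sqrt (2*pi) * exp (t^2 / 2 - s * t)"
  have c: "c \<ge> 0" unfolding c_def by simp
  have "ennreal (sqrt (2*pi) * Hr s t) = ennreal c * ennreal (Phi t)"
    unfolding Hr_def c_def using Phi_nonneg[of t] by (simp add: ennreal_mult'[symmetric] mult_ac)
  also have "\<dots> = (\<integral>\<^sup>+v. ennreal c * (ennreal (std_normal_density (t - v)) * indicator {0..} v) \<partial>lborel)"
    unfolding Phi_nn by (rule nn_integral_cmult[symmetric]) measurable
  also have "\<dots> = J s t"
    unfolding J_def
  proof (intro nn_integral_cong)
    fix v :: real
    have "c * std_normal_density (t - v) = Eg s t v"
    proof -
      have eq: "t^2/2 - s*t + (- ((t - v)^2) / 2) = t*(v-s) - v^2/2" by (simp add: power2_eq_square field_simps)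
      show ?thesis unfolding c_def std_normal_density_def Eg_def
        by (simp add: exp_add[symmetric]) (simp add: power2_eq_square field_simps)
    qed
    then show "ennreal c * (ennreal (std_normal_density (t - v)) * indicator {0..} v) = ennreal (Eg s t v) * indicator {0..} v"
      using c by (simp add: ennreal_mult'[symmetric] mult.assoc[symmetric])
  qed
  finally show ?thesis by simp
qed

lemma not_AE_notin:
  fixes a b :: real
  assumes "a < b" "AE x in lborel. x \<notin> {a..b}"
  shows False
proof -
  from assms(2) obtain N where N: "{x \<in> space lborel. \<not> x \<notin> {a..b}} \<subseteq> N" "emeasure lborel N = 0" "N \<in> sets lborel"
    by (rule AE_E)
  have "{a..b} \<subseteq> N" using N(1) by auto
  then have "emeasure lborel {a..b} \<le> emeasure lborel N" using N(3) by (intro emeasure_mono) auto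
  then show False using N(2) assms(1) by simp
qed

lemma J_pos: "J s t > 0"
proof -
  have "J s t \<noteq> 0"
  proof
    assume "J s t = 0"
    then have "AE x in lborel. ennreal (Eg s t x) * indicator {0..} x = 0"
      unfolding J_def by (subst (asm) nn_integral_0_iff_AE) auto
    then have "AE x in lborel. x \<notin> {0..1::real}"
      by eventually_elim (auto simp: Eg_def indicator_def split: if_splits)
    then show False by (rule not_AE_notin[rotated]) simp
  qed
  then show ?thesis by (simp add: zero_less_iff_neq_zero)
qed

lemma Hr_pos: "Hr s t > 0"
  using J_pos[of s t] J_eq[of s t] by (simp add: zero_less_mult_iff)

lemma Eg_nonneg[simp]: "Eg s t v \<ge> 0"
  unfolding Eg_def by simp

lemma J_lin: "(\<integral>\<^sup>+v. ennreal (a * Eg s x v + b * Eg s y v) * indicator {0..} v \<partial>lborel) = ennreal a * J s x + ennreal b * J s y"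
  if "a \<ge> 0" "b \<ge> 0"
proof -
  have pt: "ennreal (a * Eg s x v + b * Eg s y v) = ennreal a * ennreal (Eg s x v) + ennreal b * ennreal (Eg s y v)" for v
    using that by (simp add: ennreal_mult)
  have "(\<integral>\<^sup>+v. ennreal (a * Eg s x v + b * Eg s y v) * indicator {0..} v \<partial>lborel) =
        (\<integral>\<^sup>+v. ennreal a * (ennreal (Eg s x v) * indicator {0..} v) + ennreal b * (ennreal (Eg s y v) * indicator {0..} v) \<partial>lborel)"
    unfolding pt by (intro nn_integral_cong) (simp split: split_indicator)
  also have "\<dots> = (\<integral>\<^sup>+v. ennreal a * (ennreal (Eg s x v) * indicator {0..} v) \<partial>lborel) + (\<integral>\<^sup>+v. ennreal b * (ennreal (Eg s y v) * indicator {0..} v) \<partial>lborel)"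
    by (rule nn_integral_add) measurable
  also have "\<dots> = ennreal a * J s x + ennreal b * J s y"
    unfolding J_def by (simp add: nn_integral_cmult)
  finally show ?thesis .
qed

lemma Hr_nonneg: "Hr s t \<ge> 0" using Hr_pos[of s t] by simp

lemma Hr_convex: "convex_on UNIV (Hr s)"
proof (rule convex_onI)
  fix u x y :: real
  assume u: "0 < u" "u < 1"
  define m where "m = (1 - u) * x + u * y"
  define c where "c = sqrt (2*pi)"
  have c: "c > 0" unfolding c_def by simp
  have "J s m \<le> (\<integral>\<^sup>+v. ennreal ((1 - u) * Eg s x v + u * Eg s y v) * indicator {0..} v \<partial>lborel)"
    unfolding J_def
  proof (intro nn_integral_mono)
    fix v :: real
    have "exp ((1 - u) *\<^sub>R (x * (v - s) - v^2/2) + u *\<^sub>R (y * (v - s) - v^2/2)) \<le> (1 - u) * exp (x * (v - s) - v^2/2) + u * exp (y * (v - s) - v^2/2)"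
      using u by (intro convex_onD[OF exp_convex]) auto
    moreover have "(1 - u) *\<^sub>R (x * (v - s) - v^2/2) + u *\<^sub>R (y * (v - s) - v^2/2) = m * (v - s) - v^2/2"
      unfolding m_def by (simp add: field_simps)
    ultimately have "Eg s m v \<le> (1 - u) * Eg s x v + u * Eg s y v" unfolding Eg_def by simp
    then show "ennreal (Eg s m v) * indicator {0..} v \<le> ennreal ((1 - u) * Eg s x v + u * Eg s y v) * indicator {0..} v"
      by (auto split: split_indicator intro: ennreal_leI)
  qed
  also have "\<dots> = ennreal (1 - u) * J s x + ennreal u * J s y"
    using u by (intro J_lin) auto
  also have "\<dots> = ennreal (1 - u) * ennreal (c * Hr s x) + ennreal u * ennreal (c * Hr s y)"
    unfolding J_eq c_def ..
  also have "\<dots> = ennreal ((1 - u) * (c * Hr s x) + u * (c * Hr s y))"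
    using u c Hr_nonneg[of s x] Hr_nonneg[of s y] by (simp add: ennreal_mult)
  finally have "ennreal (c * Hr s m) \<le> ennreal ((1 - u) * (c * Hr s x) + u * (c * Hr s y))"
    unfolding J_eq c_def .
  then have "c * Hr s m \<le> (1 - u) * (c * Hr s x) + u * (c * Hr s y)"
    using u c Hr_nonneg[of s x] Hr_nonneg[of s y] by (subst (asm) ennreal_le_iff) auto
  then have "c * Hr s m \<le> c * ((1 - u) * Hr s x + u * Hr s y)" by (simp add: algebra_simps)
  then show "Hr s ((1 - u) *\<^sub>R x + u *\<^sub>R y) \<le> (1 - u) * Hr s x + u * Hr s y"
    unfolding m_def using c by simp
qed simp

lemma exp_mid_strict:
  fixes a b :: real assumes "a \<noteq> b"
  shows "2 * exp ((a + b) / 2) < exp a + exp b"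
proof -
  have "exp (a/2) \<noteq> exp (b/2)" using assms by simp
  then have "0 < (exp (a/2) - exp (b/2))^2" by simp
  moreover have "exp a = exp (a/2) * exp (a/2)" "exp b = exp (b/2) * exp (b/2)"
    "exp ((a + b) / 2) = exp (a/2) * exp (b/2)"
    by (simp_all add: exp_add[symmetric] add_divide_distrib)
  ultimately show ?thesis by (simp add: power2_eq_square algebra_simps)
qed

lemma exp_mid_le:
  fixes a b :: real
  shows "2 * exp ((a + b) / 2) \<le> exp a + exp b"
  using exp_mid_strict[of a b] by (cases "a = b") auto

lemma Hr_strict_mid:
  assumes "x \<noteq> y"
  shows "Hr s ((x + y) / 2) < (Hr s x + Hr s y) / 2"
proof -
  define m where "m = (x + y) / 2"
  define c where "c = sqrt (2*pi)"
  have c: "c > 0" unfolding c_def by simp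
  have mid: "m * (v - s) - v^2/2 = ((x * (v - s) - v^2/2) + (y * (v - s) - v^2/2)) / 2" for v
    unfolding m_def by (simp add: field_simps)
  have le: "2 * Eg s m v \<le> 1 * Eg s x v + 1 * Eg s y v" for v
    unfolding Eg_def mid mult_1_left by (rule exp_mid_le)
  have lt: "2 * Eg s m v < 1 * Eg s x v + 1 * Eg s y v" if "v \<noteq> s" for v
  proof -
    have "x * (v - s) - v^2/2 \<noteq> y * (v - s) - v^2/2" using assms that by auto
    then show ?thesis unfolding Eg_def mid mult_1_left by (rule exp_mid_strict)
  qed
  have J2: "(\<integral>\<^sup>+v. ennreal (2 * Eg s m v + 0 * Eg s m v) * indicator {0..} v \<partial>lborel) = ennreal 2 * J s m"
    using J_lin[of 2 0 s m m] by simp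
  have fin: "(\<integral>\<^sup>+v. ennreal (2 * Eg s m v + 0 * Eg s m v) * indicator {0..} v \<partial>lborel) \<noteq> \<infinity>"
    unfolding J2 J_eq by (simp add: ennreal_mult_eq_top_iff)
  have "(\<integral>\<^sup>+v. ennreal (2 * Eg s m v + 0 * Eg s m v) * indicator {0..} v \<partial>lborel) < (\<integral>\<^sup>+v. ennreal (1 * Eg s x v + 1 * Eg s y v) * indicator {0..} v \<partial>lborel)"
  proof (rule nn_integral_less[OF _ _ fin])
    show "AE v in lborel. ennreal (2 * Eg s m v + 0 * Eg s m v) * indicator {0..} v \<le> ennreal (1 * Eg s x v + 1 * Eg s y v) * indicator {0..} v"
    proof (intro AE_I2)
      fix v :: real
      have "ennreal (2 * Eg s m v + 0 * Eg s m v) \<le> ennreal (1 * Eg s x v + 1 * Eg s y v)"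
        using le[of v] by (intro ennreal_leI) simp
      then show "ennreal (2 * Eg s m v + 0 * Eg s m v) * indicator {0..} v \<le> ennreal (1 * Eg s x v + 1 * Eg s y v) * indicator {0..} v"
        by (simp split: split_indicator del: ennreal_plus mult_zero_left mult_1)
    qed
    show "\<not> (AE v in lborel. ennreal (1 * Eg s x v + 1 * Eg s y v) * indicator {0..} v \<le> ennreal (2 * Eg s m v + 0 * Eg s m v) * indicator {0..} v)"
    proof
      assume "AE v in lborel. ennreal (1 * Eg s x v + 1 * Eg s y v) * indicator {0..} v \<le> ennreal (2 * Eg s m v + 0 * Eg s m v) * indicator {0..} v"
      then have "AE v in lborel. v \<notin> {\<bar>s\<bar> + 1 .. \<bar>s\<bar> + 2}"
      proof eventually_elim
        case (elim v)
        show ?case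
        proof
          assume v: "v \<in> {\<bar>s\<bar> + 1 .. \<bar>s\<bar> + 2}"
          then have "v \<noteq> s" "v \<ge> 0" by auto
          with elim have "ennreal (Eg s x v + Eg s y v) \<le> ennreal (2 * Eg s m v)"
            by (simp del: ennreal_plus)
          then have "1 * Eg s x v + 1 * Eg s y v \<le> 2 * Eg s m v + 0 * Eg s m v"
            by (subst (asm) ennreal_le_iff) auto
          with lt[OF \<open>v \<noteq> s\<close>] show False by simp
        qed
      qed
      then show False by (rule not_AE_notin[rotated]) simp
    qed
  qed measurable
  also have "\<dots> = J s x + J s y" using J_lin[of 1 1 s x y] by simp
  finally have "ennreal 2 * ennreal (c * Hr s m) < ennreal (c * Hr s x) + ennreal (c * Hr s y)"
    unfolding J2 J_eq c_def .
  also have "ennreal (c * Hr s x) + ennreal (c * Hr s y) = ennreal (c * Hr s x + c * Hr s y)"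
    using c Hr_nonneg[of s x] Hr_nonneg[of s y] by simp
  finally have "ennreal (2 * (c * Hr s m)) < ennreal (c * Hr s x + c * Hr s y)"
    using c Hr_nonneg[of s m] by (simp add: ennreal_mult)
  then have "2 * (c * Hr s m) < c * Hr s x + c * Hr s y"
    by (subst (asm) ennreal_less_iff) (use c Hr_nonneg[of s m] in auto)
  then have "c * (2 * Hr s m) < c * (Hr s x + Hr s y)" by (simp add: algebra_simps)
  then show ?thesis unfolding m_def using c by simp
qed

lemma exp_int:
  fixes t :: real assumes t: "t < 0"
  shows "(\<integral>\<^sup>+v. ennreal (exp (t * v)) * indicator {0..} v \<partial>lborel) = ennreal (- 1 / t)"
proof -
  have "(\<integral>\<^sup>+v. ennreal (exp (t * v)) * indicator {0..} v \<partial>lborel) = 0 - exp (t * 0) / t"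
  proof (rule nn_integral_FTC_atLeast[where F="\<lambda>v. exp (t * v) / t"])
    show "DERIV (\<lambda>v. exp (t * v) / t) x :> exp (t * x)" for x
      using t by (auto intro!: derivative_eq_intros)
    show "((\<lambda>v. exp (t * v) / t) \<longlongrightarrow> 0) at_top"
      using t by real_asymp
  qed auto
  then show ?thesis by simp
qed

lemma sq_exp_int:
  fixes t :: real assumes t: "t < 0"
  shows "(\<integral>\<^sup>+v. ennreal (v^2 * exp (t * v)) * indicator {0..} v \<partial>lborel) = ennreal (- 2 / t^3)"
proof -
  have "(\<integral>\<^sup>+v. ennreal (v^2 * exp (t * v)) * indicator {0..} v \<partial>lborel) = 0 - (\<lambda>v. exp (t * v) * (v^2/t - 2 * v/t^2 + 2/t^3)) 0"
  proof (rule nn_integral_FTC_atLeast[where F="\<lambda>v. exp (t * v) * (v^2/t - 2 * v/t^2 + 2/t^3)"])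
    show "DERIV (\<lambda>v. exp (t * v) * (v^2/t - 2 * v/t^2 + 2/t^3)) x :> x^2 * exp (t * x)" for x
      using t by (auto intro!: derivative_eq_intros simp: field_simps power2_eq_square power3_eq_cube)
    show "((\<lambda>v. exp (t * v) * (v^2/t - 2 * v/t^2 + 2/t^3)) \<longlongrightarrow> 0) at_top"
      using t by real_asymp
  qed auto
  then show ?thesis by simp
qed

lemma nn_add_ind:
  fixes f g :: "real \<Rightarrow> real"
  assumes [measurable]: "f \<in> borel_measurable borel" "g \<in> borel_measurable borel"
    and "\<And>v. f v \<ge> 0" "\<And>v. g v \<ge> 0"
  shows "(\<integral>\<^sup>+v. ennreal (f v + g v) * indicator {0..} v \<partial>lborel) =
    (\<integral>\<^sup>+v. ennreal (f v) * indicator {0..} v \<partial>lborel) + (\<integral>\<^sup>+v. ennreal (g v) * indicator {0..} v \<partial>lborel)"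
proof -
  have "(\<integral>\<^sup>+v. ennreal (f v + g v) * indicator {0..} v \<partial>lborel) =
    (\<integral>\<^sup>+v. ennreal (f v) * indicator {0..} v + ennreal (g v) * indicator {0..} v \<partial>lborel)"
    using assms(3,4) by (intro nn_integral_cong) (simp split: split_indicator)
  also have "\<dots> = (\<integral>\<^sup>+v. ennreal (f v) * indicator {0..} v \<partial>lborel) + (\<integral>\<^sup>+v. ennreal (g v) * indicator {0..} v \<partial>lborel)"
    by (rule nn_integral_add) measurable
  finally show ?thesis .
qed

lemma nn_cmult_ind:
  fixes f :: "real \<Rightarrow> real"
  assumes [measurable]: "f \<in> borel_measurable borel" and "c \<ge> 0" "\<And>v. f v \<ge> 0"
  shows "(\<integral>\<^sup>+v. ennreal (c * f v) * indicator {0..} v \<partial>lborel) = ennreal c * (\<integral>\<^sup>+v. ennreal (f v) * indicator {0..} v \<partial>lborel)"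
proof -
  have "(\<integral>\<^sup>+v. ennreal (c * f v) * indicator {0..} v \<partial>lborel) = (\<integral>\<^sup>+v. ennreal c * (ennreal (f v) * indicator {0..} v) \<partial>lborel)"
    using assms(2,3) by (intro nn_integral_cong) (simp add: ennreal_mult mult.assoc)
  also have "\<dots> = ennreal c * (\<integral>\<^sup>+v. ennreal (f v) * indicator {0..} v \<partial>lborel)"
    by (rule nn_integral_cmult) measurable
  finally show ?thesis .
qed

lemma Hr_upper:
  fixes t :: real assumes t: "t < 0"
  shows "sqrt (2*pi) * Hr s t \<le> exp (- t * s) * (- 1 / t)"
proof -
  have "J s t \<le> (\<integral>\<^sup>+v. ennreal (exp (- t * s) * exp (t * v)) * indicator {0..} v \<partial>lborel)"
    unfolding J_def
  proof (intro nn_integral_mono)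
    fix v :: real
    have "Eg s t v \<le> exp (- t * s) * exp (t * v)"
      unfolding Eg_def exp_add[symmetric] by (simp add: algebra_simps)
    then show "ennreal (Eg s t v) * indicator {0..} v \<le> ennreal (exp (- t * s) * exp (t * v)) * indicator {0..} v"
      by (auto split: split_indicator intro: ennreal_leI)
  qed
  also have "\<dots> = ennreal (exp (- t * s)) * ennreal (- 1 / t)"
    by (subst nn_cmult_ind) (auto simp: exp_int[OF t])
  also have "\<dots> = ennreal (exp (- t * s) * (- 1 / t))"
    using t by (intro ennreal_mult[symmetric]) (auto simp: divide_simps)
  finally show ?thesis unfolding J_eq
    using t by (subst (asm) ennreal_le_iff) (auto simp: divide_simps)
qed

lemma Hr_lower:
  fixes t :: real assumes t: "t < 0"
  shows "exp (- t * s) * (- 1 / t) \<le> sqrt (2*pi) * Hr s t + exp (- t * s) * (- 1 / t^3)"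
proof -
  have tt: "t * t > 0" using t by (simp add: mult_neg_neg)
  have t3n: "t^3 < 0" using mult_pos_neg[OF tt t] by (simp add: power3_eq_cube)
  then have t3: "- 1 / t^3 \<ge> 0" by (simp add: divide_simps)
  have nt: "- 1 / t \<ge> 0" using t by (simp add: divide_simps)
  have "ennreal (exp (- t * s) * (- 1 / t)) = ennreal (exp (- t * s)) * ennreal (- 1 / t)"
    by (rule ennreal_mult[OF _ nt]) simp
  also have "\<dots> = (\<integral>\<^sup>+v. ennreal (exp (- t * s) * exp (t * v)) * indicator {0..} v \<partial>lborel)"
    by (subst nn_cmult_ind) (auto simp: exp_int[OF t])
  also have "\<dots> \<le> (\<integral>\<^sup>+v. ennreal (Eg s t v + exp (- t * s) / 2 * (v^2 * exp (t * v))) * indicator {0..} v \<partial>lborel)"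
  proof (intro nn_integral_mono)
    fix v :: real
    have e: "1 - v^2/2 \<le> exp (- (v^2/2))" using exp_ge_add_one_self[of "- (v^2/2)"] by simp
    have P: "exp (- t * s) * exp (t * v) > 0" by simp
    have "exp (- t * s) * exp (t * v) * (1 - v^2/2) \<le> exp (- t * s) * exp (t * v) * exp (- (v^2/2))"
      using mult_left_mono[OF e less_imp_le[OF P]] .
    moreover have "Eg s t v = exp (- t * s) * exp (t * v) * exp (- (v^2/2))"
      unfolding Eg_def exp_add[symmetric] by (simp add: algebra_simps)
    ultimately have "exp (- t * s) * exp (t * v) \<le> Eg s t v + exp (- t * s) / 2 * (v^2 * exp (t * v))"
      by (simp add: algebra_simps)
    then have "ennreal (exp (- t * s) * exp (t * v)) \<le> ennreal (Eg s t v + exp (- t * s) / 2 * (v^2 * exp (t * v)))"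
      by (rule ennreal_leI)
    then show "ennreal (exp (- t * s) * exp (t * v)) * indicator {0..} v \<le> ennreal (Eg s t v + exp (- t * s) / 2 * (v^2 * exp (t * v))) * indicator {0..} v"
      by (cases "v \<ge> 0") (simp_all del: ennreal_plus)
  qed
  also have "\<dots> = J s t + (\<integral>\<^sup>+v. ennreal (exp (- t * s) / 2 * (v^2 * exp (t * v))) * indicator {0..} v \<partial>lborel)"
    unfolding J_def by (rule nn_add_ind) auto
  also have "(\<integral>\<^sup>+v. ennreal (exp (- t * s) / 2 * (v^2 * exp (t * v))) * indicator {0..} v \<partial>lborel) = ennreal (exp (- t * s) / 2) * ennreal (- 2 / t^3)"
    by (subst nn_cmult_ind) (simp_all only: sq_exp_int[OF t], auto)
  also have "J s t + ennreal (exp (- t * s) / 2) * ennreal (- 2 / t^3) = ennreal (sqrt (2*pi) * Hr s t + exp (- t * s) * (- 1 / t^3))"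
  proof -
    have "ennreal (exp (- t * s) / 2) * ennreal (- 2 / t^3) = ennreal (exp (- t * s) / 2 * (- 2 / t^3))"
      by (rule ennreal_mult[symmetric]) (use t3n in \<open>auto simp: divide_nonneg_neg divide_nonpos_neg\<close>)
    also have "exp (- t * s) / 2 * (- 2 / t^3) = exp (- t * s) * (- 1 / t^3)" by simp
    finally have A: "ennreal (exp (- t * s) / 2) * ennreal (- 2 / t^3) = ennreal (exp (- t * s) * (- 1 / t^3))" .
    show ?thesis unfolding A J_eq
    proof (rule ennreal_plus[symmetric])
      show "0 \<le> exp (- t * s) * (- 1 / t ^ 3)" using t3 by (intro mult_nonneg_nonneg) auto
    qed (use Hr_nonneg[of s t] in auto)
  qed
  finally have fin: "ennreal (exp (- t * s) * (- 1 / t)) \<le> ennreal (sqrt (2*pi) * Hr s t + exp (- t * s) * (- 1 / t^3))" .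
  have e3: "0 \<le> exp (- t * s) * (- 1 / t ^ 3)" using t3 by (intro mult_nonneg_nonneg) auto
  have "0 \<le> sqrt (2*pi) * Hr s t + exp (- t * s) * (- 1 / t^3)"
    by (rule add_nonneg_nonneg[OF _ e3]) (simp add: Hr_nonneg)
  from ennreal_le_iff[OF this] fin show ?thesis by blast
qed




lemma aff1: "(1 - q) * t0 + q * y = t0 + q * (y - t0::real)" by (simp add: algebra_simps)
lemma aff2: "(1 - q) * t0 + q * y = t0 - q * (t0 - y::real)" by (simp add: algebra_simps)

lemma conv_side:
  fixes f :: "real \<Rightarrow> real"
  assumes cv: "convex_on UNIV f" and l: "0 < l" "l < 1" and eq: "(1 - l) * t0 + l * y = b"
    and lt: "f t0 < f b"
  shows "f b \<le> f y"
proof (rule ccontr)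
  assume "\<not> f b \<le> f y"
  then have fy: "f y < f b" by simp
  have "f b \<le> (1 - l) * f t0 + l * f y"
    using convex_onD[OF cv, of l t0 y] l eq by simp
  moreover have "(1 - l) * f t0 < (1 - l) * f b" using l lt by (intro mult_strict_left_mono) auto
  moreover have "l * f y < l * f b" using l fy by (intro mult_strict_left_mono) auto
  moreover have "(1 - l) * f b + l * f b = f b" by (simp add: algebra_simps)
  ultimately show False by linarith
qed

lemma conv_unique_min:
  fixes f :: "real \<Rightarrow> real"
  assumes cv: "convex_on UNIV f" and sm: "\<And>x y. x \<noteq> y \<Longrightarrow> f ((x + y) / 2) < (f x + f y) / 2"
    and ab: "a < t0" "t0 < b" "f t0 < f a" "f t0 < f b"
  shows "\<exists>t. t < b \<and> (\<forall>t'. f t \<le> f t') \<and> (\<forall>t''. (\<forall>t'. f t'' \<le> f t') \<longrightarrow> t'' = t)"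
proof -
  have cont: "continuous_on UNIV f" by (rule convex_on_continuous[OF _ cv]) simp
  have "\<exists>x\<in>{a..b}. \<forall>y\<in>{a..b}. f x \<le> f y"
    by (rule continuous_attains_inf) (use ab in \<open>auto intro: continuous_on_subset[OF cont]\<close>)
  then obtain t where t: "t \<in> {a..b}" "\<And>y. y \<in> {a..b} \<Longrightarrow> f t \<le> f y" by blast
  have right: "f b \<le> f y" if y: "y > b" for y
  proof (rule conv_side[OF cv, of "(b - t0) / (y - t0)" t0 y])
    have yt: "y - t0 > 0" using ab y by simp
    show "0 < (b - t0) / (y - t0)" using ab yt by simp
    show "(b - t0) / (y - t0) < 1" using ab y yt by (simp add: divide_less_eq)
    have "(1 - (b - t0) / (y - t0)) * t0 + (b - t0) / (y - t0) * y = t0 + (b - t0) / (y - t0) * (y - t0)"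
      by (rule aff1)
    also have "(b - t0) / (y - t0) * (y - t0) = b - t0" using yt by simp
    finally show "(1 - (b - t0) / (y - t0)) * t0 + (b - t0) / (y - t0) * y = b" by simp
  qed (use ab in auto)
  have left: "f a \<le> f y" if y: "y < a" for y
  proof (rule conv_side[OF cv, of "(t0 - a) / (t0 - y)" t0 y])
    have yt: "t0 - y > 0" using ab y by simp
    show "0 < (t0 - a) / (t0 - y)" using ab yt by simp
    show "(t0 - a) / (t0 - y) < 1" using ab y yt by (simp add: divide_less_eq)
    have "(1 - (t0 - a) / (t0 - y)) * t0 + (t0 - a) / (t0 - y) * y = t0 - (t0 - a) / (t0 - y) * (t0 - y)"
      by (rule aff2)
    also have "(t0 - a) / (t0 - y) * (t0 - y) = t0 - a" using yt by simp
    finally show "(1 - (t0 - a) / (t0 - y)) * t0 + (t0 - a) / (t0 - y) * y = a" by simp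
  qed (use ab in auto)
  have glob: "\<forall>t'. f t \<le> f t'"
  proof
    fix y
    show "f t \<le> f y"
    proof (cases "y \<in> {a..b}")
      case True then show ?thesis using t by auto
    next
      case False
      then have "y < a \<or> y > b" by auto
      then show ?thesis
      proof
        assume "y < a"
        then have "f a \<le> f y" by (rule left)
        moreover have "f t \<le> f a" using t(2)[of a] ab by simp
        ultimately show ?thesis by simp
      next
        assume "y > b"
        then have "f b \<le> f y" by (rule right)
        moreover have "f t \<le> f b" using t(2)[of b] ab by simp
        ultimately show ?thesis by simp
      qed
    qed
  qed
  have "f t \<le> f t0" using t(2)[of t0] ab by simp
  then have "t \<noteq> b" using ab by auto
  then have tb: "t < b" using t(1) by auto
  have uniq: "\<forall>t''. (\<forall>t'. f t'' \<le> f t') \<longrightarrow> t'' = t"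
  proof (intro allI impI)
    fix t'' assume g: "\<forall>t'. f t'' \<le> f t'"
    show "t'' = t"
    proof (rule ccontr)
      assume "t'' \<noteq> t"
      then have "f ((t'' + t) / 2) < (f t'' + f t) / 2" by (rule sm)
      moreover have "f t'' \<le> f ((t'' + t) / 2)" using g by simp
      moreover have "f t \<le> f ((t'' + t) / 2)" using glob by simp
      ultimately show False by simp
    qed
  qed
  show ?thesis using tb glob uniq by blast
qed

lemma Hr_vals:
  fixes s :: real assumes s: "0 < s" "s \<le> 1/16"
  shows "Hr s (- 1/s) < Hr s (- 8/s)" "Hr s (- 1/s) < Hr s (- 1/(4 * s))"
proof -
  define c where "c = sqrt (2*pi)"
  have c: "c > 0" unfolding c_def by simp
  have s2: "s^2 \<le> 1/256" using s power_mono[of s "1/16" 2] by (simp add: power2_eq_square)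
  have "c * Hr s (- 1/s) \<le> exp (- (- 1/s) * s) * (- 1 / (- 1/s))"
    unfolding c_def using s by (intro Hr_upper) simp
  also have "\<dots> = exp 1 * s" using s by simp
  finally have w0: "c * Hr s (- 1/s) \<le> exp 1 * s" .
  have e1: "exp 1 * s \<le> 3 * s" using exp_le s by simp
  have L: "exp (- (- 1/(4 * s)) * s) * (- 1 / (- 1/(4 * s))) \<le> c * Hr s (- 1/(4 * s)) + exp (- (- 1/(4 * s)) * s) * (- 1 / (- 1/(4 * s))^3)"
    unfolding c_def using s by (intro Hr_lower) simp
  have eq1: "- (- 1/(4 * s)) * s = 1/4" using s by simp
  have eq2: "- 1 / (- 1/(4 * s)) = 4 * s" using s by simp
  have eq3: "- 1 / (- 1/(4 * s))^3 = 64 * s^3" using s by (simp add: power3_eq_cube field_simps)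
  have "exp (1/4) * (4 * s) \<le> c * Hr s (- 1/(4 * s)) + exp (1/4) * (64 * s^3)" using L[unfolded eq1 eq2 eq3] .
  then have wb: "exp (1/4) * (4 * s - 64 * s^3) \<le> c * Hr s (- 1/(4 * s))" by (simp add: algebra_simps)
  have "64 * s^3 = s * (64 * s^2)" by (simp add: power2_eq_square power3_eq_cube)
  also have "\<dots> \<le> s * (1/4)" using s s2 by (intro mult_left_mono) auto
  finally have "4 * s - 64 * s^3 \<ge> 15/4 * s" by simp
  moreover have "exp (1/4::real) \<ge> 5/4" using exp_ge_add_one_self[of "1/4::real"] by simp
  ultimately have "exp (1/4) * (4 * s - 64 * s^3) \<ge> 5/4 * (15/4 * s)"
    using s by (intro mult_mono) auto
  with wb have wb': "75/16 * s \<le> c * Hr s (- 1/(4 * s))" by simp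
  show "Hr s (- 1/s) < Hr s (- 1/(4 * s))"
  proof -
    have "c * Hr s (- 1/s) < c * Hr s (- 1/(4 * s))" using w0 e1 wb' s by linarith
    then show ?thesis using c by simp
  qed
  have L8: "exp (- (- 8/s) * s) * (- 1 / (- 8/s)) \<le> c * Hr s (- 8/s) + exp (- (- 8/s) * s) * (- 1 / (- 8/s)^3)"
    unfolding c_def using s by (intro Hr_lower) simp
  have e1': "- (- 8/s) * s = 8" using s by simp
  have e2': "- 1 / (- 8/s) = s / 8" using s by simp
  have e3': "- 1 / (- 8/s)^3 = s^3 / 512" using s by (simp add: power3_eq_cube field_simps)
  have "exp 8 * (s / 8) \<le> c * Hr s (- 8/s) + exp 8 * (s^3 / 512)" using L8[unfolded e1' e2' e3'] .
  then have wa: "exp 8 * (s / 8 - s^3 / 512) \<le> c * Hr s (- 8/s)" by (simp add: algebra_simps)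
  have "s^3 / 512 = s * (s^2 / 512)" by (simp add: power2_eq_square power3_eq_cube)
  also have "\<dots> \<le> s * (1/8 - 1/10)" using s s2 by (intro mult_left_mono) auto
  finally have "s / 8 - s^3 / 512 \<ge> s / 10" by simp
  moreover have "exp (8::real) \<ge> 81"
  proof -
    have "exp (2::real) \<ge> 3" using exp_ge_add_one_self[of "2::real"] by simp
    then have "exp (2::real) ^ 4 \<ge> 3 ^ 4" by (intro power_mono) auto
    moreover have "exp (2::real) ^ 4 = exp 8" by (simp add: exp_of_nat_mult[symmetric])
    ultimately show ?thesis by simp
  qed
  ultimately have "exp 8 * (s / 8 - s^3 / 512) \<ge> 81 * (s / 10)"
    using s by (intro mult_mono) auto
  with wa have wa': "81 / 10 * s \<le> c * Hr s (- 8/s)" by simp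
  show "Hr s (- 1/s) < Hr s (- 8/s)"
  proof -
    have "c * Hr s (- 1/s) < c * Hr s (- 8/s)" using w0 e1 wa' s by linarith
    then show ?thesis using c by simp
  qed
qed




lemma sum_sq_shift:
  fixes x :: "nat \<Rightarrow> real"
  shows "(\<Sum>k\<in>{1..n}. (x k - \<theta>)^2) = (\<Sum>k\<in>{1..n}. (x k)^2) - 2 * \<theta> * Ksum x n + real n * \<theta>^2"
  unfolding Ksum_def by (induction n) (simp_all add: power2_diff algebra_simps)

lemma prod_normal:
  fixes x :: "nat \<Rightarrow> real"
  shows "(\<Prod>k\<in>{1..n}. std_normal_density (x k - \<theta>)) =
    ((1 / sqrt (2*pi))^n * exp (- (\<Sum>k\<in>{1..n}. (x k)^2) / 2)) * exp (\<theta> * Ksum x n - real n * \<theta>^2 / 2)"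
proof -
  have "(\<Prod>k\<in>{1..n}. std_normal_density (x k - \<theta>)) = (\<Prod>k\<in>{1..n}. (1 / sqrt (2*pi)) * exp (- ((x k - \<theta>)^2) / 2))"
    by (simp add: std_normal_density_def)
  also have "\<dots> = (1 / sqrt (2*pi))^n * exp (\<Sum>k\<in>{1..n}. - ((x k - \<theta>)^2) / 2)"
    by (simp only: prod.distrib prod_constant card_atLeastAtMost) (simp add: exp_sum)
  also have "(\<Sum>k\<in>{1..n}. - ((x k - \<theta>)^2) / 2) = - (\<Sum>k\<in>{1..n}. (x k - \<theta>)^2) / 2"
    by (simp add: sum_negf sum_divide_distrib)
  also have "\<dots> = - (\<Sum>k\<in>{1..n}. (x k)^2) / 2 + (\<theta> * Ksum x n - real n * \<theta>^2 / 2)"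
    unfolding sum_sq_shift by (simp add: field_simps)
  finally show ?thesis by (simp only: exp_add mult.assoc)
qed

lemma Nsize_pos:
  assumes "n \<ge> 1" "Ksum x n \<ge> 0"
  shows "Nsize \<gamma> n x = n"
  using assms unfolding Nsize_def psi_def by simp

lemma Nsize_neg:
  assumes "n \<ge> 1" "Ksum x n < 0"
  shows "Nsize \<gamma> n x = 2 * n"
proof -
  have "real n powr \<gamma> > 0" using assms by simp
  then have "Ksum x n / real n powr \<gamma> < 0" using assms by (simp add: divide_neg_pos)
  then show ?thesis unfolding Nsize_def psi_def by simp
qed

lemma cond_lik_Hr:
  assumes n: "n \<ge> 1" and K: "Ksum x n \<ge> 0"
  defines "P \<equiv> (1 / sqrt (2*pi))^n * exp (- (\<Sum>k\<in>{1..n}. (x k)^2) / 2)"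
  shows "cond_lik \<gamma> n n x \<theta> = P / Hr (Ksum x n / sqrt (real n)) (sqrt (real n) * \<theta>)"
proof -
  have cp: "cond_prob_N \<gamma> n n x = 1" unfolding cond_prob_N_def psi_def using K n by simp
  have pn: "prob_N n n \<theta> = Phi (sqrt (real n) * \<theta>)" unfolding prob_N_def by simp
  have sq: "sqrt (real n) > 0" using n by simp
  have e: "(sqrt (real n) * \<theta>)^2 / 2 - Ksum x n / sqrt (real n) * (sqrt (real n) * \<theta>) = - (\<theta> * Ksum x n - real n * \<theta>^2 / 2)"
    using sq by (simp add: power_mult_distrib algebra_simps)
  show ?thesis
    unfolding cond_lik_def cp pn prod_normal Hr_def e P_def
    by (simp add: exp_minus field_simps)
qed

lemma mle_c_bound:
  assumes n: "n \<ge> 1" and K: "0 < Ksum x n" "Ksum x n \<le> sqrt (real n) / 16"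
  shows "\<bar>mle_c \<gamma> n x\<bar> \<ge> 1 / (4 * Ksum x n)"
proof -
  define s where "s = Ksum x n / sqrt (real n)"
  have sq: "sqrt (real n) > 0" using n by simp
  have s: "0 < s" "s \<le> 1/16" unfolding s_def using K sq by (auto simp: divide_simps)
  define P where "P = (1 / sqrt (2*pi))^n * exp (- (\<Sum>k\<in>{1..n}. (x k)^2) / 2)"
  have P: "P > 0" unfolding P_def by simp
  have cl: "cond_lik \<gamma> n n x \<theta> = P / Hr s (sqrt (real n) * \<theta>)" for \<theta>
    unfolding P_def s_def using cond_lik_Hr[OF n, of x \<gamma> \<theta>] K by simp
  have "- 8 / s < - 1 / s" "- 1 / s < - 1 / (4 * s)" using s by (auto simp: divide_simps)
  from conv_unique_min[OF Hr_convex Hr_strict_mid this Hr_vals[OF s]]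
  obtain t where t: "t < - 1 / (4 * s)" "\<forall>t'. Hr s t \<le> Hr s t'"
    "\<forall>t''. (\<forall>t'. Hr s t'' \<le> Hr s t') \<longrightarrow> t'' = t" by blast
  have "mle_c \<gamma> n x = t / sqrt (real n)"
    unfolding mle_c_def Nsize_pos[OF n less_imp_le[OF K(1)]]
  proof (rule the_equality)
    show "\<forall>\<theta>'. cond_lik \<gamma> n n x \<theta>' \<le> cond_lik \<gamma> n n x (t / sqrt (real n))"
    proof
      fix \<theta>'
      have "P / Hr s (sqrt (real n) * \<theta>') \<le> P / Hr s t"
        using t(2) P Hr_pos by (intro divide_left_mono) (auto intro: mult_pos_pos)
      then show "cond_lik \<gamma> n n x \<theta>' \<le> cond_lik \<gamma> n n x (t / sqrt (real n))"
        unfolding cl using sq by simp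
    qed
  next
    fix \<theta> assume a: "\<forall>\<theta>'. cond_lik \<gamma> n n x \<theta>' \<le> cond_lik \<gamma> n n x \<theta>"
    have "\<forall>t'. Hr s (sqrt (real n) * \<theta>) \<le> Hr s t'"
    proof
      fix t'
      have "P / Hr s t' \<le> P / Hr s (sqrt (real n) * \<theta>)"
        using a[rule_format, of "t' / sqrt (real n)"] sq unfolding cl by simp
      then show "Hr s (sqrt (real n) * \<theta>) \<le> Hr s t'"
        using P Hr_pos[of s t'] Hr_pos[of s "sqrt (real n) * \<theta>"] by (simp add: divide_le_cancel frac_le_eq divide_simps)
    qed
    then have "sqrt (real n) * \<theta> = t" using t(3) by blast
    then show "\<theta> = t / sqrt (real n)" using sq by (simp add: field_simps)
  qed
  moreover have tneg: "t < 0"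
  proof -
    have "0 < 1 / (4 * s)" using s by simp
    moreover have "t < - (1 / (4 * s))" using t(1) by simp
    ultimately show ?thesis by linarith
  qed
  moreover have "1 / (4 * s) < - t" using t(1) by simp
  ultimately have mle: "mle_c \<gamma> n x = t / sqrt (real n)" and tl: "1 / (4 * s) < - t" and tneg: "t < 0" by auto
  have "1 / (4 * Ksum x n) = 1 / (4 * s) / sqrt (real n)" unfolding s_def using sq by simp
  also have "\<dots> \<le> (- t) / sqrt (real n)" using tl sq by (intro divide_right_mono) auto
  also have "\<dots> = \<bar>mle_c \<gamma> n x\<bar>" unfolding mle using tneg sq by (simp add: abs_divide)
  finally show ?thesis .
qed




lemma inv_int_inf:
  fixes c d :: real assumes c: "c > 0" and d: "d > 0"
  shows "(\<integral>\<^sup>+y. ennreal (c / y) * indicator {0<..d} y \<partial>lborel) = \<infinity>"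
proof (rule ccontr)
  assume "(\<integral>\<^sup>+y. ennreal (c / y) * indicator {0<..d} y \<partial>lborel) \<noteq> \<infinity>"
  then obtain r where r: "(\<integral>\<^sup>+y. ennreal (c / y) * indicator {0<..d} y \<partial>lborel) = ennreal r" "r \<ge> 0"
    by (cases "(\<integral>\<^sup>+y. ennreal (c / y) * indicator {0<..d} y \<partial>lborel)") auto
  define e where "e = d * exp (- (r / c + 1))"
  have "r / c \<ge> 0" using r c by simp
  then have "exp (- (r / c + 1)) \<le> 1" by simp
  then have e: "0 < e" "e \<le> d" unfolding e_def using d by (auto intro: mult_left_le)
  have lne: "ln e = ln d - (r / c + 1)" unfolding e_def using d by (simp add: ln_mult)
  have "(\<integral>\<^sup>+y. ennreal (c / y) * indicator {e..d} y \<partial>lborel) = ennreal (c * ln d - c * ln e)"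
  proof (rule nn_integral_FTC_Icc[where F="\<lambda>y. c * ln y"])
    show "DERIV (\<lambda>y. c * ln y) x :> c / x" if "x \<in> {e..d}" for x
      using that e by (auto intro!: derivative_eq_intros simp: field_simps)
  qed (use e c in auto)
  also have "c * ln d - c * ln e = r + c" unfolding lne using c by (simp add: field_simps)
  finally have A: "(\<integral>\<^sup>+y. ennreal (c / y) * indicator {e..d} y \<partial>lborel) = ennreal (r + c)" .
  have "(\<integral>\<^sup>+y. ennreal (c / y) * indicator {e..d} y \<partial>lborel) \<le> (\<integral>\<^sup>+y. ennreal (c / y) * indicator {0<..d} y \<partial>lborel)"
    using e by (intro nn_integral_mono) (auto split: split_indicator)
  then have "ennreal (r + c) \<le> ennreal r" unfolding A r .
  then show False using c r by (subst (asm) ennreal_le_iff) auto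
qed

lemma distK:
  assumes "prob_space M" "prob_space.indep_vars M (\<lambda>_. borel) X {1..}"
    "\<And>k. k \<ge> 1 \<Longrightarrow> distributed M lborel (X k) std_normal_density" "n \<ge> 1"
  shows "distributed M lborel (\<lambda>\<omega>. Ksum (\<lambda>k. X k \<omega>) n) (normal_density 0 (sqrt (real n)))"
proof -
  interpret prob_space M by fact
  have "distributed M lborel (\<lambda>\<omega>. \<Sum>i\<in>{1..n}. X i \<omega>) (normal_density (\<Sum>i\<in>{1..n}. 0) (sqrt (\<Sum>i\<in>{1..n}. 1\<^sup>2)))"
    by (rule sum_indep_normal[where \<mu>="\<lambda>_. 0" and \<sigma>="\<lambda>_. 1"])
       (use assms in \<open>auto intro: indep_vars_subset\<close>)
  then show ?thesis unfolding Ksum_def by simp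
qed

lemma E_K:
  assumes "prob_space M" "prob_space.indep_vars M (\<lambda>_. borel) X {1..}"
    "\<And>k. k \<ge> 1 \<Longrightarrow> distributed M lborel (X k) std_normal_density" "n \<ge> 1"
    and g[measurable]: "g \<in> borel_measurable borel"
  shows "(\<integral>\<^sup>+\<omega>. g (Ksum (\<lambda>k. X k \<omega>) n) \<partial>M) = (\<integral>\<^sup>+y. ennreal (normal_density 0 (sqrt (real n)) y) * g y \<partial>lborel)"
proof (rule distributed_nn_integral[OF distK[OF assms(1-4)], symmetric])
  have "measurable lborel (borel :: ennreal measure) = measurable borel borel" by (rule measurable_cong_sets) simp_all
  then show "g \<in> borel_measurable lborel" using g by simp
qed

lemma K_meas:
  assumes "prob_space M" "prob_space.indep_vars M (\<lambda>_. borel) X {1..}"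
    "\<And>k. k \<ge> 1 \<Longrightarrow> distributed M lborel (X k) std_normal_density" "n \<ge> 1"
  shows "(\<lambda>\<omega>. Ksum (\<lambda>k. X k \<omega>) n) \<in> borel_measurable M"
  using distributed_measurable[OF distK[OF assms]] by simp

lemma E_abs_normal:
  fixes \<sigma> c :: real assumes s: "\<sigma> > 0" and c: "c \<ge> 0"
  shows "(\<integral>\<^sup>+y. ennreal (normal_density 0 \<sigma> y) * ennreal (c * \<bar>y\<bar>) \<partial>lborel) = ennreal (c * (\<sigma> * sqrt (2 / pi)))"
proof -
  have hb: "has_bochner_integral lborel (\<lambda>y. normal_density 0 \<sigma> y * \<bar>y\<bar>) (\<sigma> * sqrt (2 / pi))"
    using normal_moment_abs_odd[of \<sigma> 0 0] s by simp
  then have hb2: "has_bochner_integral lborel (\<lambda>y. c * (normal_density 0 \<sigma> y * \<bar>y\<bar>)) (c * (\<sigma> * sqrt (2 / pi)))"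
    by (intro has_bochner_integral_mult_right)
  have "(\<integral>\<^sup>+y. ennreal (normal_density 0 \<sigma> y) * ennreal (c * \<bar>y\<bar>) \<partial>lborel) =
        (\<integral>\<^sup>+y. ennreal (c * (normal_density 0 \<sigma> y * \<bar>y\<bar>)) \<partial>lborel)"
    using c by (intro nn_integral_cong) (simp add: ennreal_mult[symmetric] normal_density_nonneg mult_ac)
  also have "\<dots> = ennreal (integral\<^sup>L lborel (\<lambda>y. c * (normal_density 0 \<sigma> y * \<bar>y\<bar>)))"
    using hb2 c by (intro nn_integral_eq_integral) (auto simp: has_bochner_integral_iff normal_density_nonneg)
  also have "\<dots> = ennreal (c * (\<sigma> * sqrt (2 / pi)))"
    by (simp only: has_bochner_integral_integral_eq[OF hb2])
  finally show ?thesis .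
qed




lemma mle_bound:
  assumes n: "n \<ge> 1"
  shows "ennreal \<bar>mle \<gamma> n x\<bar> \<le> ennreal (1 / real n * \<bar>Ksum x n\<bar>) + ennreal (1 / real (2 * n) * \<bar>Ksum x (2 * n)\<bar>)"
proof -
  have "\<bar>mle \<gamma> n x\<bar> \<le> 1 / real n * \<bar>Ksum x n\<bar> + 1 / real (2 * n) * \<bar>Ksum x (2 * n)\<bar>"
  proof (cases "Ksum x n \<ge> 0")
    case True
    then have "mle \<gamma> n x = Ksum x n / real n" unfolding mle_def using Nsize_pos[OF n True] by simp
    then have "\<bar>mle \<gamma> n x\<bar> = 1 / real n * \<bar>Ksum x n\<bar>" by (simp add: abs_divide)
    moreover have "0 \<le> 1 / real (2 * n) * \<bar>Ksum x (2 * n)\<bar>" by simp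
    ultimately show ?thesis by linarith
  next
    case False
    then have "mle \<gamma> n x = Ksum x (2 * n) / real (2 * n)" unfolding mle_def using Nsize_neg[OF n] by simp
    then have "\<bar>mle \<gamma> n x\<bar> = 1 / real (2 * n) * \<bar>Ksum x (2 * n)\<bar>" by (simp add: abs_divide)
    moreover have "0 \<le> 1 / real n * \<bar>Ksum x n\<bar>" by simp
    ultimately show ?thesis by linarith
  qed
  then have "ennreal \<bar>mle \<gamma> n x\<bar> \<le> ennreal (1 / real n * \<bar>Ksum x n\<bar> + 1 / real (2 * n) * \<bar>Ksum x (2 * n)\<bar>)"
    by (rule ennreal_leI)
  also have "\<dots> = ennreal (1 / real n * \<bar>Ksum x n\<bar>) + ennreal (1 / real (2 * n) * \<bar>Ksum x (2 * n)\<bar>)"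
    by (rule ennreal_plus) auto
  finally show ?thesis .
qed

theorem mainTheorem1:
  fixes M :: "'a measure" and X :: "nat \<Rightarrow> 'a \<Rightarrow> real" and \<gamma> :: real
  assumes "prob_space M"
    and "prob_space.indep_vars M (\<lambda>_. borel) X {1..}"
    and "\<And>k. k \<ge> 1 \<Longrightarrow> distributed M lborel (X k) std_normal_density"
    and "\<gamma> \<ge> 0"
  shows "((\<lambda>n. \<integral>\<^sup>+ \<omega>. ennreal \<bar>mle \<gamma> n (\<lambda>k. X k \<omega>)\<bar> \<partial>M) \<longlonglongrightarrow> 0) \<and>
         (\<forall>n::nat. n \<ge> 1 \<longrightarrow> (\<integral>\<^sup>+ \<omega>. ennreal \<bar>mle_c \<gamma> n (\<lambda>k. X k \<omega>)\<bar> \<partial>M) = \<infinity>)"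
proof
  note A = assms(1-3)
  define B where "B n = ennreal (1 / real n * (sqrt (real n) * sqrt (2 / pi))) + ennreal (1 / real (2 * n) * (sqrt (real (2 * n)) * sqrt (2 / pi)))" for n :: nat
  have EK_abs: "(\<integral>\<^sup>+\<omega>. ennreal (1 / real m * \<bar>Ksum (\<lambda>k. X k \<omega>) m\<bar>) \<partial>M) = ennreal (1 / real m * (sqrt (real m) * sqrt (2 / pi)))"
    if m: "m \<ge> 1" for m :: nat
  proof -
    have "(\<integral>\<^sup>+\<omega>. ennreal (1 / real m * \<bar>Ksum (\<lambda>k. X k \<omega>) m\<bar>) \<partial>M) =
      (\<integral>\<^sup>+y. ennreal (normal_density 0 (sqrt (real m)) y) * ennreal (1 / real m * \<bar>y\<bar>) \<partial>lborel)"
      by (rule E_K[OF A m, where g="\<lambda>y. ennreal (1 / real m * \<bar>y\<bar>)"]) measurable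
    also have "\<dots> = ennreal (1 / real m * (sqrt (real m) * sqrt (2 / pi)))"
      using m by (intro E_abs_normal) auto
    finally show ?thesis .
  qed
  have bound: "(\<integral>\<^sup>+ \<omega>. ennreal \<bar>mle \<gamma> n (\<lambda>k. X k \<omega>)\<bar> \<partial>M) \<le> B n" if n: "n \<ge> 1" for n :: nat
  proof -
    have n2: "2 * n \<ge> 1" using n by simp
    have [measurable]: "(\<lambda>\<omega>. Ksum (\<lambda>k. X k \<omega>) n) \<in> borel_measurable M" "(\<lambda>\<omega>. Ksum (\<lambda>k. X k \<omega>) (2 * n)) \<in> borel_measurable M"
      using K_meas[OF A n] K_meas[OF A n2] by auto
    have "(\<integral>\<^sup>+ \<omega>. ennreal \<bar>mle \<gamma> n (\<lambda>k. X k \<omega>)\<bar> \<partial>M) \<le>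
      (\<integral>\<^sup>+ \<omega>. ennreal (1 / real n * \<bar>Ksum (\<lambda>k. X k \<omega>) n\<bar>) + ennreal (1 / real (2 * n) * \<bar>Ksum (\<lambda>k. X k \<omega>) (2 * n)\<bar>) \<partial>M)"
      by (intro nn_integral_mono mle_bound n)
    also have "\<dots> = (\<integral>\<^sup>+ \<omega>. ennreal (1 / real n * \<bar>Ksum (\<lambda>k. X k \<omega>) n\<bar>) \<partial>M) + (\<integral>\<^sup>+ \<omega>. ennreal (1 / real (2 * n) * \<bar>Ksum (\<lambda>k. X k \<omega>) (2 * n)\<bar>) \<partial>M)"
      by (rule nn_integral_add) measurable
    also have "\<dots> = B n" unfolding B_def EK_abs[OF n] EK_abs[OF n2] ..
    finally show ?thesis .
  qed
  have Blim: "B \<longlonglongrightarrow> 0"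
  proof -
    have l1: "(\<lambda>n::nat. 1 / real n * (sqrt (real n) * sqrt (2 / pi))) \<longlonglongrightarrow> 0" by real_asymp
    have l2: "(\<lambda>n::nat. 1 / real (2 * n) * (sqrt (real (2 * n)) * sqrt (2 / pi))) \<longlonglongrightarrow> 0" by real_asymp
    have "B \<longlonglongrightarrow> ennreal 0 + ennreal 0"
      unfolding B_def by (intro tendsto_add tendsto_ennrealI l1 l2)
    then show ?thesis by simp
  qed
  show "(\<lambda>n. \<integral>\<^sup>+ \<omega>. ennreal \<bar>mle \<gamma> n (\<lambda>k. X k \<omega>)\<bar> \<partial>M) \<longlonglongrightarrow> 0"
  proof (rule tendsto_sandwich[OF _ _ tendsto_const Blim])
    show "\<forall>\<^sub>F n in sequentially. 0 \<le> (\<integral>\<^sup>+ \<omega>. ennreal \<bar>mle \<gamma> n (\<lambda>k. X k \<omega>)\<bar> \<partial>M)" by simp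
    show "\<forall>\<^sub>F n in sequentially. (\<integral>\<^sup>+ \<omega>. ennreal \<bar>mle \<gamma> n (\<lambda>k. X k \<omega>)\<bar> \<partial>M) \<le> B n"
      using eventually_ge_at_top[of 1] by eventually_elim (rule bound)
  qed
next
  note A = assms(1-3)
  show "\<forall>n::nat. n \<ge> 1 \<longrightarrow> (\<integral>\<^sup>+ \<omega>. ennreal \<bar>mle_c \<gamma> n (\<lambda>k. X k \<omega>)\<bar> \<partial>M) = \<infinity>"
  proof (intro allI impI)
    fix n :: nat assume n: "n \<ge> 1"
    define d where "d = sqrt (real n) / 16"
    define c0 where "c0 = exp (- 1) / sqrt (2 * pi * real n) / 4"
    have d: "d > 0" unfolding d_def using n by simp
    have c0: "c0 > 0" unfolding c0_def using n by simp
    define g where "g y = ennreal (1 / (4 * y)) * indicator {0<..d} y" for y :: real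
    have g_meas[measurable]: "g \<in> borel_measurable borel" unfolding g_def by measurable
    have G1: "(\<integral>\<^sup>+ \<omega>. g (Ksum (\<lambda>k. X k \<omega>) n) \<partial>M) \<le> (\<integral>\<^sup>+ \<omega>. ennreal \<bar>mle_c \<gamma> n (\<lambda>k. X k \<omega>)\<bar> \<partial>M)"
    proof (intro nn_integral_mono)
      fix \<omega>
      show "g (Ksum (\<lambda>k. X k \<omega>) n) \<le> ennreal \<bar>mle_c \<gamma> n (\<lambda>k. X k \<omega>)\<bar>"
      proof (cases "Ksum (\<lambda>k. X k \<omega>) n \<in> {0<..d}")
        case True
        then have "1 / (4 * Ksum (\<lambda>k. X k \<omega>) n) \<le> \<bar>mle_c \<gamma> n (\<lambda>k. X k \<omega>)\<bar>"
          using mle_c_bound[OF n] unfolding d_def by auto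
        then show ?thesis unfolding g_def using True by (simp add: ennreal_leI)
      next
        case False
        then show ?thesis unfolding g_def by simp
      qed
    qed
    have G2: "(\<integral>\<^sup>+ \<omega>. g (Ksum (\<lambda>k. X k \<omega>) n) \<partial>M) = (\<integral>\<^sup>+y. ennreal (normal_density 0 (sqrt (real n)) y) * g y \<partial>lborel)"
      by (rule E_K[OF A n g_meas])
    have G3: "(\<integral>\<^sup>+y. ennreal (c0 / y) * indicator {0<..d} y \<partial>lborel) \<le> (\<integral>\<^sup>+y. ennreal (normal_density 0 (sqrt (real n)) y) * g y \<partial>lborel)"
    proof (intro nn_integral_mono)
      fix y :: real
      show "ennreal (c0 / y) * indicator {0<..d} y \<le> ennreal (normal_density 0 (sqrt (real n)) y) * g y"
      proof (cases "y \<in> {0<..d}")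
        case True
        then have y: "0 < y" "y \<le> d" by auto
        have "y^2 \<le> d^2" using y by (intro power_mono) auto
        also have "d^2 = real n / 256" unfolding d_def using n by (simp add: power_divide)
        finally have "y^2 / (2 * real n) \<le> 1" using n by (simp add: divide_simps)
        then have ex: "exp (- 1) \<le> exp (- (y^2) / (2 * real n))" by simp
        have nd: "normal_density 0 (sqrt (real n)) y = 1 / sqrt (2 * pi * real n) * exp (- (y^2) / (2 * real n))"
          unfolding normal_density_def using n by simp
        have "1 / sqrt (2 * pi * real n) * exp (- 1) \<le> 1 / sqrt (2 * pi * real n) * exp (- (y^2) / (2 * real n))"
          using ex by (intro mult_left_mono) auto
        then have "c0 \<le> normal_density 0 (sqrt (real n)) y / 4"
          unfolding nd c0_def by simp
        then have "c0 / y \<le> (normal_density 0 (sqrt (real n)) y / 4) / y"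
          using y by (intro divide_right_mono) auto
        also have "(normal_density 0 (sqrt (real n)) y / 4) / y = normal_density 0 (sqrt (real n)) y * (1 / (4 * y))"
          by simp
        finally have "c0 / y \<le> normal_density 0 (sqrt (real n)) y * (1 / (4 * y))" .
        then have "ennreal (c0 / y) \<le> ennreal (normal_density 0 (sqrt (real n)) y * (1 / (4 * y)))"
          by (rule ennreal_leI)
        also have "\<dots> = ennreal (normal_density 0 (sqrt (real n)) y) * ennreal (1 / (4 * y))"
          using y by (intro ennreal_mult) (auto simp: normal_density_nonneg)
        finally show ?thesis unfolding g_def using True by simp
      next
        case False
        then show ?thesis unfolding g_def by simp
      qed
    qed
    have G4: "(\<integral>\<^sup>+y. ennreal (c0 / y) * indicator {0<..d} y \<partial>lborel) = \<infinity>"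
      by (rule inv_int_inf[OF c0 d])
    have "\<infinity> \<le> (\<integral>\<^sup>+ \<omega>. ennreal \<bar>mle_c \<gamma> n (\<lambda>k. X k \<omega>)\<bar> \<partial>M)"
      using G1 G3 unfolding G2 G4 by (rule order_trans[rotated])
    then show "(\<integral>\<^sup>+ \<omega>. ennreal \<bar>mle_c \<gamma> n (\<lambda>k. X k \<omega>)\<bar> \<partial>M) = \<infinity>"
      by (simp add: top_unique)
  qed
qed


end
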